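(* Let $n\ge 2$ and $\ell\ge 2$ be integers, let $G=\mathbb{Z}_{\ell^n-(\ell-1)^n}$, and let $\alpha=\ell(\ell-1)^{-1}\in G$. Let $L=(\ell,\ell,\dots,\ell)\in\mathbb{Z}^n$ and $K=(\ell-1,\ell-1,\dots,\ell-1)\in\mathbb{Z}^n$. Then $\mathcal{S}_{L,K}$ splits $G$ with the splitting sequence $\beta=\beta_1,\dots,\beta_n$ defined by $\beta_i=\alpha^{i-1}$, $1\le i\le n$.
   Context: $\mathbb{Z}_m$ is the ring of integers modulo $m$ (here $\ell-1$ is invertible in it). For integer vectors $L,K$ with $0<k_i<\ell_i$, the discrete $n$-dimensional chair is $\mathcal{S}_{L,K}=\{(x_1,\dots,x_n)\in\mathbb{Z}^n: 0\le x_i<\ell_i \text{ for all } i, \text{ and there exists } j \text{ with } x_j<\ell_j-k_j\}$. For an Abelian group $G$, a sequence $\beta=\beta_1,\dots,\beta_n$ in $G$ and $X\in\mathbb{Z}^n$, $X\cdot\beta=\sum_i x_i\beta_i$. A finite set $\mathcal{S}\subset\mathbb{Z}^n$ splits $G$ with splitting sequence $\beta$ if $\{\mathcal{E}\cdot\beta:\mathcal{E}\in\mathcal{S}\}$ consists of $|\mathcal{S}|$ distinct elements of $G$. *)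

theory Defs
  imports "HOL-Number_Theory.Number_Theory"
begin

(* Points of Z^n are functions nat => int, coordinates indexed 0..n-1, zero outside. *)
definition chair :: "nat \<Rightarrow> (nat \<Rightarrow> int) \<Rightarrow> (nat \<Rightarrow> int) \<Rightarrow> (nat \<Rightarrow> int) set" where
  "chair n L K = {x. (\<forall>i<n. 0 \<le> x i \<and> x i < L i) \<and> (\<exists>j<n. x j < L j - K j) \<and> (\<forall>i\<ge>n. x i = 0)}"

(* S splits Z_m with splitting sequence beta iff the map X \<mapsto> X\<cdot>beta is injective on S
   (for finite S this is: |S| distinct elements). *)
definition splits_mod :: "int \<Rightarrow> nat \<Rightarrow> (nat \<Rightarrow> int) set \<Rightarrow> (nat \<Rightarrow> int) \<Rightarrow> bool" where
  "splits_mod m n S \<beta> = inj_on (\<lambda>X. (\<Sum>i<n. X i * \<beta> i) mod m) S"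

end

theory Submission
  imports Defs
begin
lemma down_closure:
  fixes P :: "nat \<Rightarrow> bool"
  assumes step: "\<And>i. 0 < i \<Longrightarrow> i < n \<Longrightarrow> P i \<Longrightarrow> P (i - 1)"
  shows "a < n \<Longrightarrow> P a \<Longrightarrow> k \<le> a \<Longrightarrow> P k"
proof (induction a arbitrary: k)
  case 0 then show ?case by simp
next
  case (Suc a)
  have "P a" using step[of "Suc a"] Suc.prems by simp
  then show ?case using Suc by (cases "k = Suc a") auto
qed

lemma cyc_closure:
  fixes P :: "nat \<Rightarrow> bool"
  assumes "i0 < n" "P i0" "\<And>i. 0 < i \<Longrightarrow> i < n \<Longrightarrow> P i \<Longrightarrow> P (i - 1)"
    "P 0 \<Longrightarrow> P (n - 1)" "j < n"
  shows "P j"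
proof -
  have "P 0" using down_closure[of n P i0 0] assms by auto
  then have "P (n - 1)" using assms(4) by simp
  then show ?thesis using down_closure[of n P "n - 1" j] assms by auto
qed

lemma extremal:
  fixes x y cc :: "nat \<Rightarrow> int" and l :: int
  assumes n: "n \<ge> 1" and l: "l \<ge> 2"
    and bx: "\<And>i. i < n \<Longrightarrow> 0 \<le> x i \<and> x i < l"
    and by': "\<And>i. i < n \<Longrightarrow> 0 \<le> y i \<and> y i < l"
    and zx: "\<exists>j<n. x j = 0" and zy: "\<exists>j<n. y j = 0"
    and rel: "\<And>i. 0 < i \<Longrightarrow> i < n \<Longrightarrow> x i - y i = (l-1)*cc(i-1) - l*cc i"
    and rel0: "x 0 - y 0 = (l-1)*cc(n-1) - l*cc 0"
  shows "\<forall>i<n. x i = y i"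
proof -
  define M where "M = Max (cc ` {..<n})"
  define mn where "mn = Min (cc ` {..<n})"
  have ne: "cc ` {..<n} \<noteq> {}" using n by (auto simp: lessThan_empty_iff)
  have leM: "\<And>i. i < n \<Longrightarrow> cc i \<le> M" unfolding M_def by auto
  have gem: "\<And>i. i < n \<Longrightarrow> mn \<le> cc i" unfolding mn_def by auto
  obtain iM where iM: "iM < n" "cc iM = M" unfolding M_def using Max_in[OF _ ne] by auto
  obtain im where im: "im < n" "cc im = mn" unfolding mn_def using Min_in[OF _ ne] by auto
  have relg: "\<And>i. i < n \<Longrightarrow> x i - y i = (l-1)*cc(if i = 0 then n-1 else i-1) - l*cc i"
    using rel rel0 by auto
  have M0: "M \<le> 0"
  proof (rule ccontr)
    assume Mpos: "\<not> M \<le> 0"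
    have st: "cc p = M" if "i < n" "p < n" "x i - y i = (l-1)*cc p - l*cc i" "cc i = M" for i p
    proof (rule ccontr)
      assume "cc p \<noteq> M"
      then have "cc p \<le> M - 1" using leM[OF that(2)] by simp
      then have "(l-1)*cc p \<le> (l-1)*(M-1)" using l by (intro mult_left_mono) auto
      moreover have "x i - y i \<ge> -(l-1)" using bx[OF that(1)] by'[OF that(1)] by auto
      ultimately show False using that Mpos by (auto simp: algebra_simps)
    qed
    have all: "cc j = M" if "j < n" for j
    proof (rule cyc_closure[of iM n "\<lambda>i. cc i = M"])
      show "\<And>i. 0 < i \<Longrightarrow> i < n \<Longrightarrow> cc i = M \<Longrightarrow> cc (i - 1) = M"
        using st rel by auto
      show "cc 0 = M \<Longrightarrow> cc (n - 1) = M" using st[of 0 "n-1"] rel0 n by auto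
    qed (use iM that in auto)
    obtain j where j: "j < n" "y j = 0" using zy by auto
    have "x j - y j = (l-1)*M - l*M" using relg[OF j(1)] all j(1) n by (auto split: if_splits)
    then show False using j bx[OF j(1)] Mpos by (auto simp: algebra_simps)
  qed
  have m0: "mn \<ge> 0"
  proof (rule ccontr)
    assume mneg: "\<not> mn \<ge> 0"
    have st: "cc p = mn" if "i < n" "p < n" "x i - y i = (l-1)*cc p - l*cc i" "cc i = mn" for i p
    proof (rule ccontr)
      assume "cc p \<noteq> mn"
      then have "cc p \<ge> mn + 1" using gem[OF that(2)] by simp
      then have "(l-1)*cc p \<ge> (l-1)*(mn+1)" using l by (intro mult_left_mono) auto
      moreover have "x i - y i \<le> (l-1)" using bx[OF that(1)] by'[OF that(1)] by auto
      ultimately show False using that mneg by (auto simp: algebra_simps)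
    qed
    have all: "cc j = mn" if "j < n" for j
    proof (rule cyc_closure[of im n "\<lambda>i. cc i = mn"])
      show "\<And>i. 0 < i \<Longrightarrow> i < n \<Longrightarrow> cc i = mn \<Longrightarrow> cc (i - 1) = mn"
        using st rel by auto
      show "cc 0 = mn \<Longrightarrow> cc (n - 1) = mn" using st[of 0 "n-1"] rel0 n by auto
    qed (use im that in auto)
    obtain j where j: "j < n" "x j = 0" using zx by auto
    have "x j - y j = (l-1)*mn - l*mn" using relg[OF j(1)] all j(1) n by (auto split: if_splits)
    then show False using j by'[OF j(1)] mneg by (auto simp: algebra_simps)
  qed
  have z: "\<And>i. i < n \<Longrightarrow> cc i = 0" using leM gem M0 m0 by (meson order.trans antisym)
  show ?thesis
  proof (intro allI impI)
    fix i assume i: "i < n"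
    have "n - 1 < n" "i - 1 < n" using n i by auto
    then have "cc (if i = 0 then n-1 else i-1) = 0" using z by auto
    then show "x i = y i" using relg[OF i] z[OF i] by simp
  qed
qed

lemma carries:
  fixes d :: "nat \<Rightarrow> int" and l c :: int
  assumes n: "n \<ge> 1" and l: "l \<ge> 2"
    and S: "(\<Sum>j<n. d j * l^j * (l-1)^(n-1-j)) = - (l^n - (l-1)^n) * c"
  shows "\<exists>cc. cc (n-1) = c \<and> (\<forall>i. 0<i \<longrightarrow> i<n \<longrightarrow> d i = (l-1)*cc(i-1) - l*cc i)
              \<and> d 0 = (l-1)*c - l*cc 0"
proof -
  define P where "P i = (\<Sum>j\<le>i. d j * l^j * (l-1)^(i-j))" for i
  define A where "A i = (l-1)^(Suc i) * c - P i" for i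
  define Q where "Q i = (\<Sum>j\<in>{Suc i..<n}. d j * l^(j - Suc i) * (l-1)^(n-1-j))" for i
  define cc where "cc i = A i div l^(Suc i)" for i
  have Prec: "P (Suc i) = (l-1) * P i + d (Suc i) * l^(Suc i)" for i
  proof -
    have "(l-1) * P i = (\<Sum>j\<le>i. d j * l^j * (l-1)^(Suc i-j))"
      unfolding P_def sum_distrib_left
      by (intro sum.cong refl) (simp add: Suc_diff_le)
    then show ?thesis unfolding P_def by simp
  qed
  have split: "(\<Sum>j<n. d j * l^j * (l-1)^(n-1-j)) = (l-1)^(n-1-i) * P i + l^(Suc i) * Q i"
    if i: "i < n" for i
  proof -
    have U: "{..<n} = {..i} \<union> {Suc i..<n}" using i by auto
    have "(\<Sum>j<n. d j * l^j * (l-1)^(n-1-j)) =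
       (\<Sum>j\<le>i. d j * l^j * (l-1)^(n-1-j)) + (\<Sum>j\<in>{Suc i..<n}. d j * l^j * (l-1)^(n-1-j))"
      unfolding U by (subst sum.union_disjoint) auto
    moreover have "(\<Sum>j\<le>i. d j * l^j * (l-1)^(n-1-j)) = (l-1)^(n-1-i) * P i"
      unfolding P_def sum_distrib_left
    proof (intro sum.cong refl)
      fix j assume "j \<in> {..i}"
      then have "n-1-j = (n-1-i) + (i-j)" using i by auto
      then show "d j * l^j * (l-1)^(n-1-j) = (l-1)^(n-1-i) * (d j * l^j * (l-1)^(i-j))"
        by (simp add: power_add algebra_simps)
    qed
    moreover have "(\<Sum>j\<in>{Suc i..<n}. d j * l^j * (l-1)^(n-1-j)) = l^(Suc i) * Q i"
      unfolding Q_def sum_distrib_left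
    proof (intro sum.cong refl)
      fix j assume "j \<in> {Suc i..<n}"
      then have "j = Suc i + (j - Suc i)" by auto
      then have "l^j = l^(Suc i) * l^(j - Suc i)" by (metis power_add)
      then show "d j * l^j * (l-1)^(n-1-j) = l^(Suc i) * (d j * l^(j - Suc i) * (l-1)^(n-1-j))"
        by (simp add: algebra_simps)
    qed
    ultimately show ?thesis by simp
  qed
  have cop: "coprime (l^(Suc i)) ((l-1)^k)" for i k
  proof -
    have "coprime l (l-1)"
      by simp
    then show ?thesis by simp
  qed
  have dv: "l^(Suc i) dvd A i" if i: "i < n" for i
  proof -
    have e1: "(l-1)^(Suc i) * (l-1)^(n-1-i) = (l-1)^n"
      using i by (metis Suc_leI le_add_diff_inverse power_add diff_diff_left plus_1_eq_Suc)
    have "(l-1)^(n-1-i) * A i = (l-1)^n * c - (l-1)^(n-1-i) * P i"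
      unfolding A_def using e1 by (simp add: algebra_simps)
    also have "\<dots> = l^n * c + l^(Suc i) * Q i"
      using split[OF i] S by (simp add: algebra_simps)
    finally have eq: "(l-1)^(n-1-i) * A i = l^n * c + l^(Suc i) * Q i" .
    have "l^(Suc i) dvd l^n" using i by (intro le_imp_power_dvd) auto
    then have "l^(Suc i) dvd (l-1)^(n-1-i) * A i" unfolding eq by auto
    then show ?thesis using cop coprime_dvd_mult_right_iff by blast
  qed
  have ccA: "l^(Suc i) * cc i = A i" if "i < n" for i
    unfolding cc_def using dv[OF that] by simp
  have lpos: "l^k \<noteq> 0" for k using l by simp
  have r1: "d i = (l-1)*cc(i-1) - l*cc i" if i0: "0 < i" "i < n" for i
  proof -
    obtain k where k: "i = Suc k" using i0(1) gr0_implies_Suc by blast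
    have sk: "Suc k < n" and kn: "k < n" using i0 k by auto
    have "A (Suc k) = (l-1) * A k - d (Suc k) * l^(Suc k)"
      unfolding A_def Prec by (simp add: right_diff_distrib)
    also have "\<dots> = (l-1) * (l^(Suc k) * cc k) - d (Suc k) * l^(Suc k)"
      by (simp only: ccA[OF kn])
    also have "\<dots> = l^(Suc k) * ((l-1) * cc k - d (Suc k))"
      by (simp add: algebra_simps)
    finally have e: "A (Suc k) = l^(Suc k) * ((l-1) * cc k - d (Suc k))" .
    have "A (Suc k) = l^(Suc (Suc k)) * cc (Suc k)"
      by (simp only: ccA[OF sk])
    also have "\<dots> = l^(Suc k) * (l * cc (Suc k))"
      by (simp only: power_Suc mult.assoc mult.commute mult.left_commute)
    finally have "l^(Suc k) * (l * cc (Suc k)) = l^(Suc k) * ((l-1) * cc k - d (Suc k))"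
      using e by (metis eq_commute)
    moreover have "l^(Suc k) \<noteq> 0" using l by simp
    ultimately have "l * cc (Suc k) = (l-1) * cc k - d (Suc k)" by (metis mult_left_cancel)
    then show ?thesis using k by simp
  qed
  have Pn: "P (n-1) = (\<Sum>j<n. d j * l^j * (l-1)^(n-1-j))"
  proof -
    have "{..n-1} = {..<n}" using n by auto
    then show ?thesis unfolding P_def by simp
  qed
  have r2: "cc (n-1) = c"
  proof -
    have "A (n-1) = l^n * c" unfolding A_def Pn S using n by (simp add: algebra_simps)
    then have "l^n * cc (n-1) = l^n * c" using ccA[of "n-1"] n by simp
    then show ?thesis using l by simp
  qed
  have r3: "d 0 = (l-1)*c - l*cc 0"
  proof -
    have "l * cc 0 = (l-1)*c - d 0" using ccA[of 0] n unfolding A_def P_def by simp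
    then show ?thesis by simp
  qed
  show ?thesis using r1 r2 r3 by blast
qed

theorem mainTheorem3:
  fixes n :: nat and l :: int and \<alpha> :: int
  assumes "n \<ge> 2" and "l \<ge> 2"
    and "[(l - 1) * \<alpha> = l] (mod (l ^ n - (l - 1) ^ n))"
  shows "splits_mod (l ^ n - (l - 1) ^ n) n (chair n (\<lambda>_. l) (\<lambda>_. l - 1)) (\<lambda>i. \<alpha> ^ i)"
proof -
  define m where "m = l ^ n - (l - 1) ^ n"
  define w where "w i = l^i * (l-1)^(n-1-i)" for i
  have n1: "n \<ge> 1" using assms(1) by simp
  have ha: "[(l - 1) * \<alpha> = l] (mod m)" using assms(3) unfolding m_def .
  have cw: "[(l-1)^(n-1) * \<alpha>^i = w i] (mod m)" if i: "i < n" for i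
  proof -
    have ni: "n-1 = (n-1-i) + i" using i by simp
    have "(l-1)^(n-1) = (l-1)^(n-1-i) * (l-1)^i"
      by (subst ni, rule power_add)
    then have "(l-1)^(n-1) * \<alpha>^i = (l-1)^(n-1-i) * ((l-1) * \<alpha>)^i"
      by (simp add: power_mult_distrib)
    moreover have "[(l-1)^(n-1-i) * ((l-1) * \<alpha>)^i = (l-1)^(n-1-i) * l^i] (mod m)"
      by (intro cong_scalar_left cong_pow ha)
    ultimately show ?thesis unfolding w_def by (simp add: mult.commute)
  qed
  have cs: "[(\<Sum>i<n. z i * w i) = (l-1)^(n-1) * (\<Sum>i<n. z i * \<alpha>^i)] (mod m)" for z :: "nat \<Rightarrow> int"
  proof -
    have "[(\<Sum>i<n. z i * w i) = (\<Sum>i<n. z i * ((l-1)^(n-1) * \<alpha>^i))] (mod m)"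
    proof (rule cong_sum)
      fix i assume "i \<in> {..<n}"
      then have "[w i = (l-1)^(n-1) * \<alpha>^i] (mod m)" using cw cong_sym by blast
      then show "[z i * w i = z i * ((l-1)^(n-1) * \<alpha>^i)] (mod m)" by (rule cong_scalar_left)
    qed
    then show ?thesis by (simp add: sum_distrib_left algebra_simps)
  qed
  show ?thesis unfolding splits_mod_def inj_on_def m_def[symmetric]
  proof (intro ballI impI)
    fix x y
    assume hx: "x \<in> chair n (\<lambda>_. l) (\<lambda>_. l - 1)" and hy: "y \<in> chair n (\<lambda>_. l) (\<lambda>_. l - 1)"
      and eq: "(\<Sum>i<n. x i * \<alpha> ^ i) mod m = (\<Sum>i<n. y i * \<alpha> ^ i) mod m"
    have bx: "\<And>i. i < n \<Longrightarrow> 0 \<le> x i \<and> x i < l" and ox: "\<And>i. i \<ge> n \<Longrightarrow> x i = 0"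
      and zx0: "\<exists>j<n. x j < 1"
      using hx unfolding chair_def by auto
    have by': "\<And>i. i < n \<Longrightarrow> 0 \<le> y i \<and> y i < l" and oy: "\<And>i. i \<ge> n \<Longrightarrow> y i = 0"
      and zy0: "\<exists>j<n. y j < 1"
      using hy unfolding chair_def by auto
    have zx: "\<exists>j<n. x j = 0"
    proof -
      obtain j where j: "j < n" "x j < 1" using zx0 by blast
      then have "x j = 0" using bx[of j] by linarith
      then show ?thesis using j by blast
    qed
    have zy: "\<exists>j<n. y j = 0"
    proof -
      obtain j where j: "j < n" "y j < 1" using zy0 by blast
      then have "y j = 0" using by'[of j] by linarith
      then show ?thesis using j by blast
    qed
    have "[(\<Sum>i<n. x i * \<alpha> ^ i) = (\<Sum>i<n. y i * \<alpha> ^ i)] (mod m)" using eq unfolding cong_def .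
    then have sc: "[(l-1)^(n-1) * (\<Sum>i<n. x i * \<alpha> ^ i) = (l-1)^(n-1) * (\<Sum>i<n. y i * \<alpha> ^ i)] (mod m)"
      by (rule cong_scalar_left)
    have "[(\<Sum>i<n. x i * w i) = (\<Sum>i<n. y i * w i)] (mod m)"
      using cong_trans[OF cong_trans[OF cs[of x] sc] cong_sym[OF cs[of y]]] .
    then have "m dvd (\<Sum>i<n. x i * w i) - (\<Sum>i<n. y i * w i)" by (simp add: cong_iff_dvd_diff)
    moreover have "(\<Sum>i<n. x i * w i) - (\<Sum>i<n. y i * w i) = (\<Sum>j<n. (x j - y j) * l^j * (l-1)^(n-1-j))"
      unfolding w_def by (simp add: sum_subtractf[symmetric] algebra_simps)
    ultimately obtain k where k: "(\<Sum>j<n. (x j - y j) * l^j * (l-1)^(n-1-j)) = m * k"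
      by (metis dvd_def)
    have "(\<Sum>j<n. (x j - y j) * l^j * (l-1)^(n-1-j)) = - (l^n - (l-1)^n) * (-k)"
      using k unfolding m_def by (simp add: algebra_simps)
    from carries[OF n1 assms(2) this] obtain cc where
      c1: "cc (n-1) = -k" and c2: "\<forall>i. 0<i \<longrightarrow> i<n \<longrightarrow> x i - y i = (l-1)*cc(i-1) - l*cc i"
      and c3: "x 0 - y 0 = (l-1)*(-k) - l*cc 0" by blast
    have "\<forall>i<n. x i = y i"
      by (rule extremal[OF n1 assms(2) bx by' zx zy]) (use c1 c2 c3 in auto)
    then show "x = y"
    proof -
      assume A: "\<forall>i<n. x i = y i"
      show "x = y"
      proof (rule ext)
        fix i show "x i = y i" using A ox[of i] oy[of i] by (cases "i < n") auto
      qed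
    qed
  qed
qed

end
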